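(* Let $\mathbb{K}$ be a field of characteristic zero, let $p,q\in\mathbb{Z}^n_{\ge0}$ be nonzero vectors and let $\beta\in\mathbb{K}^n\setminus\{0\}$. Then the following are equivalent: (i) the derivations $\Delta^p_\beta$ and $\Delta^q_\beta$ of $\mathbb{K}[x_1,\ldots,x_n]$ generate a finite dimensional Lie algebra; (ii) $[\Delta^p_\beta,\Delta^q_\beta]=0$; (iii) $\langle\beta,p\rangle=\langle\beta,q\rangle$.
   Context: For $p\in\mathbb{Z}^n_{\ge0}$ and $\beta\in\mathbb{K}^n$, $\Delta^p_\beta:=x_1^{p_1}\cdots x_n^{p_n}\sum_{j=1}^n\beta_jx_j\partial_j$, where $\partial_j=\partial/\partial x_j$. $\langle\beta,u\rangle:=\sum_i\beta_iu_i$. The Lie bracket is the commutator of derivations. *)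

theory Defs
  imports Main "HOL-Library.Poly_Mapping"
begin

text \<open>Polynomials in the variables x_j, j ranging over the finite type 'n (so n = CARD('n)),
  with coefficients in 'a: finitely supported maps from exponent vectors ('n => nat) to 'a.\<close>
type_synonym ('n, 'a) mpoly = "('n \<Rightarrow> nat) \<Rightarrow>\<^sub>0 'a"

type_synonym ('n, 'a) mop = "('n, 'a) mpoly \<Rightarrow> ('n, 'a) mpoly"

definition pairing :: "('n::finite \<Rightarrow> 'a::comm_semiring_1) \<Rightarrow> ('n \<Rightarrow> nat) \<Rightarrow> 'a" where
  "pairing \<beta> u = (\<Sum>j\<in>UNIV. \<beta> j * of_nat (u j))"

text \<open>Delta^p_beta = x^p * sum_j beta_j x_j d/dx_j; on the monomial x^m it gives
  <beta,m> x^(m+p); extended linearly.\<close>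
definition Delta :: "('n::finite \<Rightarrow> nat) \<Rightarrow> ('n \<Rightarrow> 'a::field) \<Rightarrow> ('n, 'a) mop" where
  "Delta p \<beta> f = (\<Sum>m\<in>Poly_Mapping.keys f. Poly_Mapping.single (\<lambda>j. m j + p j) (pairing \<beta> m * Poly_Mapping.lookup f m))"

definition lie_bracket :: "('n, 'a::field) mop \<Rightarrow> ('n, 'a) mop \<Rightarrow> ('n, 'a) mop" where
  "lie_bracket D E = (\<lambda>f. D (E f) - E (D f))"

definition op_scale :: "'a::field \<Rightarrow> ('n, 'a) mop \<Rightarrow> ('n, 'a) mop" where
  "op_scale c D = (\<lambda>f. Poly_Mapping.map (\<lambda>x. c * x) (D f))"

inductive_set lie_generated :: "('n, 'a::field) mop \<Rightarrow> ('n, 'a) mop \<Rightarrow> ('n, 'a) mop set"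
  for D E where
  gen1: "D \<in> lie_generated D E"
| gen2: "E \<in> lie_generated D E"
| zero: "(\<lambda>f. 0) \<in> lie_generated D E"
| add: "X \<in> lie_generated D E \<Longrightarrow> Y \<in> lie_generated D E \<Longrightarrow> (\<lambda>f. X f + Y f) \<in> lie_generated D E"
| scale: "X \<in> lie_generated D E \<Longrightarrow> op_scale c X \<in> lie_generated D E"
| bracket: "X \<in> lie_generated D E \<Longrightarrow> Y \<in> lie_generated D E \<Longrightarrow> lie_bracket X Y \<in> lie_generated D E"

definition fin_dim_ops :: "('n, 'a::field) mop set \<Rightarrow> bool" where
  "fin_dim_ops L \<longleftrightarrow> (\<exists>B. finite B \<and>
     (\<forall>X\<in>L. \<exists>c. X = (\<lambda>f. \<Sum>b\<in>B. op_scale (c b) b f)))"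

end

theory Submission
  imports Defs
begin


lemma lookup_scale: "Poly_Mapping.lookup (op_scale c X f) k = c * Poly_Mapping.lookup (X f) k"
  by (simp add: op_scale_def map.rep_eq when_def)

lemma op_scale_1: "op_scale 1 X = X"
  by (intro ext poly_mapping_eqI) (simp add: lookup_scale)

lemma pairing_add: "pairing \<beta> (\<lambda>i. u i + v i) = pairing \<beta> u + pairing \<beta> v"
  by (simp add: pairing_def sum.distrib algebra_simps)

lemma pairing_lin: "pairing \<beta> (\<lambda>i. u i + k * v i) = pairing \<beta> u + of_nat k * pairing \<beta> v"
  by (simp add: pairing_def sum.distrib sum_distrib_left algebra_simps)

lemma lookup_Delta:
  "Poly_Mapping.lookup (Delta p \<beta> f) k =
     (if p \<le> k then pairing \<beta> (k - p) * Poly_Mapping.lookup f (k - p) else 0)"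
proof -
  have eq: "((\<lambda>j. m j + p j) = k) \<longleftrightarrow> (p \<le> k \<and> m = k - p)" for m
  proof
    assume "(\<lambda>j. m j + p j) = k"
    then have "\<And>j. k j = m j + p j" by auto
    then show "p \<le> k \<and> m = k - p" by (auto simp: fun_eq_iff le_fun_def)
  qed (auto simp: fun_eq_iff le_fun_def)
  have "Poly_Mapping.lookup (Delta p \<beta> f) k =
     (\<Sum>m\<in>Poly_Mapping.keys f. if m = k - p \<and> p \<le> k then pairing \<beta> m * Poly_Mapping.lookup f m else 0)"
    unfolding Delta_def lookup_sum lookup_single when_def
    by (intro sum.cong refl) (auto simp: eq)
  also have "\<dots> = (if p \<le> k then pairing \<beta> (k - p) * Poly_Mapping.lookup f (k - p) else 0)"
    by (cases "p \<le> k") (auto simp: sum.delta in_keys_iff)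
  finally show ?thesis .
qed

lemma Delta_lin:
  assumes "\<And>k. Poly_Mapping.lookup g k = \<alpha> * Poly_Mapping.lookup u k + \<gamma> * Poly_Mapping.lookup v k"
  shows "Poly_Mapping.lookup (Delta r \<beta> g) k =
     \<alpha> * Poly_Mapping.lookup (Delta r \<beta> u) k + \<gamma> * Poly_Mapping.lookup (Delta r \<beta> v) k"
  by (simp add: lookup_Delta assms algebra_simps)

lemma pw_le: "(\<And>i. (s::'b \<Rightarrow> nat) i \<le> k i) \<Longrightarrow> s \<le> k"
  by (simp add: le_fun_def)

lemma bracket_Delta:
  fixes \<beta> :: "'n::finite \<Rightarrow> 'a::field"
  shows "lie_bracket (op_scale c (Delta s \<beta>)) (op_scale d (Delta r \<beta>)) =
    op_scale (c * d * (pairing \<beta> r - pairing \<beta> s)) (Delta (\<lambda>i. s i + r i) \<beta>)"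
proof (intro ext poly_mapping_eqI)
  fix f k
  let ?t = "(\<lambda>i. s i + r i)"
  show "Poly_Mapping.lookup (lie_bracket (op_scale c (Delta s \<beta>)) (op_scale d (Delta r \<beta>)) f) k =
    Poly_Mapping.lookup (op_scale (c * d * (pairing \<beta> r - pairing \<beta> s)) (Delta ?t \<beta>) f) k"
  proof (cases "?t \<le> k")
    case True
    then have a: "\<And>i. s i + r i \<le> k i" by (simp add: le_fun_def)
    have h1: "s \<le> k" proof (rule pw_le) fix i show "s i \<le> k i" using a[of i] by simp qed
    have h2: "r \<le> k" proof (rule pw_le) fix i show "r i \<le> k i" using a[of i] by simp qed
    have h3: "r \<le> k - s" proof (rule pw_le) fix i show "r i \<le> (k - s) i" using a[of i] by simp qed
    have h4: "s \<le> k - r" proof (rule pw_le) fix i show "s i \<le> (k - r) i" using a[of i] by simp qed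
    have e1: "k - s - r = k - ?t" "k - r - s = k - ?t"
      by (simp_all add: fun_eq_iff add.commute)
    have e2: "k - s = (\<lambda>i. (k - ?t) i + r i)" "k - r = (\<lambda>i. (k - ?t) i + s i)"
      by (rule ext, use a in simp)+
    have p1: "pairing \<beta> (k - s) = pairing \<beta> (k - ?t) + pairing \<beta> r"
      by (subst e2(1)) (rule pairing_add)
    have p2: "pairing \<beta> (k - r) = pairing \<beta> (k - ?t) + pairing \<beta> s"
      by (subst e2(2)) (rule pairing_add)
    show ?thesis
      unfolding lie_bracket_def lookup_minus lookup_scale lookup_Delta
      unfolding if_P[OF h1] if_P[OF h2] if_P[OF h3] if_P[OF h4] if_P[OF True] e1 p1 p2
      by (simp add: algebra_simps)
  next
    case False
    have h1: "\<not> (s \<le> k \<and> r \<le> k - s)"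
    proof
      assume "s \<le> k \<and> r \<le> k - s"
      then have b: "s i \<le> k i \<and> r i \<le> k i - s i" for i by (auto simp: le_fun_def)
      have "?t \<le> k" proof (rule pw_le) fix i show "s i + r i \<le> k i" using b[of i] by arith qed
      with False show False by simp
    qed
    have h2: "\<not> (r \<le> k \<and> s \<le> k - r)"
    proof
      assume "r \<le> k \<and> s \<le> k - r"
      then have b: "r i \<le> k i \<and> s i \<le> k i - r i" for i by (auto simp: le_fun_def)
      have "?t \<le> k" proof (rule pw_le) fix i show "s i + r i \<le> k i" using b[of i] by arith qed
      with False show False by simp
    qed
    show ?thesis
      unfolding lie_bracket_def lookup_minus lookup_scale lookup_Delta
      using False h1 h2 by auto
  qed
qed

lemma nat_aux: "(m::nat) + k = m * k \<Longrightarrow> k \<ge> 3 \<Longrightarrow> False"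
proof -
  assume a: "m + k = m * k" "k \<ge> 3"
  consider "m = 0" | "m = 1" | "m \<ge> 2" by linarith
  then show False
  proof cases
    case 3
    then have "m * k \<ge> 2 * k" by simp
    moreover have "m * k \<ge> m * 3" using a by simp
    ultimately show False using a by linarith
  qed (use a in auto)
qed

lemma span_case:
  fixes \<beta> :: "'n::finite \<Rightarrow> 'a::field"
  assumes comm: "\<And>f. Delta p \<beta> (Delta q \<beta> f) = Delta q \<beta> (Delta p \<beta> f)"
    and X: "X \<in> lie_generated (Delta p \<beta>) (Delta q \<beta>)"
  shows "\<exists>\<alpha> \<gamma>. \<forall>f k. Poly_Mapping.lookup (X f) k =
     \<alpha> * Poly_Mapping.lookup (Delta p \<beta> f) k + \<gamma> * Poly_Mapping.lookup (Delta q \<beta> f) k"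
  using X
proof induction
  case gen1
  then show ?case by (intro exI[of _ 1] exI[of _ 0]) simp
next
  case gen2
  then show ?case by (intro exI[of _ 0] exI[of _ 1]) simp
next
  case zero
  then show ?case by (intro exI[of _ 0] exI[of _ 0]) simp
next
  case (add X Y)
  then obtain a1 g1 a2 g2 where
    "\<forall>f k. Poly_Mapping.lookup (X f) k = a1 * Poly_Mapping.lookup (Delta p \<beta> f) k + g1 * Poly_Mapping.lookup (Delta q \<beta> f) k"
    "\<forall>f k. Poly_Mapping.lookup (Y f) k = a2 * Poly_Mapping.lookup (Delta p \<beta> f) k + g2 * Poly_Mapping.lookup (Delta q \<beta> f) k"
    by blast
  then show ?case by (intro exI[of _ "a1 + a2"] exI[of _ "g1 + g2"]) (simp add: lookup_add algebra_simps)
next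
  case (scale X c)
  then obtain a1 g1 where
    "\<forall>f k. Poly_Mapping.lookup (X f) k = a1 * Poly_Mapping.lookup (Delta p \<beta> f) k + g1 * Poly_Mapping.lookup (Delta q \<beta> f) k"
    by blast
  then show ?case by (intro exI[of _ "c * a1"] exI[of _ "c * g1"]) (simp add: lookup_scale algebra_simps)
next
  case (bracket X Y)
  then obtain a1 g1 a2 g2 where
    hX: "\<And>f k. Poly_Mapping.lookup (X f) k = a1 * Poly_Mapping.lookup (Delta p \<beta> f) k + g1 * Poly_Mapping.lookup (Delta q \<beta> f) k" and
    hY: "\<And>f k. Poly_Mapping.lookup (Y f) k = a2 * Poly_Mapping.lookup (Delta p \<beta> f) k + g2 * Poly_Mapping.lookup (Delta q \<beta> f) k"
    by blast
  have "Poly_Mapping.lookup (lie_bracket X Y f) k = 0" for f k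
  proof -
    have 1: "Poly_Mapping.lookup (X (Y f)) k =
      a1 * (a2 * Poly_Mapping.lookup (Delta p \<beta> (Delta p \<beta> f)) k + g2 * Poly_Mapping.lookup (Delta p \<beta> (Delta q \<beta> f)) k)
      + g1 * (a2 * Poly_Mapping.lookup (Delta q \<beta> (Delta p \<beta> f)) k + g2 * Poly_Mapping.lookup (Delta q \<beta> (Delta q \<beta> f)) k)"
      unfolding hX by (simp only: Delta_lin[OF hY])
    have 2: "Poly_Mapping.lookup (Y (X f)) k =
      a2 * (a1 * Poly_Mapping.lookup (Delta p \<beta> (Delta p \<beta> f)) k + g1 * Poly_Mapping.lookup (Delta p \<beta> (Delta q \<beta> f)) k)
      + g2 * (a1 * Poly_Mapping.lookup (Delta q \<beta> (Delta p \<beta> f)) k + g1 * Poly_Mapping.lookup (Delta q \<beta> (Delta q \<beta> f)) k)"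
      unfolding hY by (simp only: Delta_lin[OF hX])
    show ?thesis unfolding lie_bracket_def lookup_minus 1 2 comm by (simp add: algebra_simps)
  qed
  then show ?case by (intro exI[of _ 0] exI[of _ 0]) simp
qed


theorem lemma4:
  fixes p q :: "'n::finite \<Rightarrow> nat" and \<beta> :: "'n \<Rightarrow> 'a::field_char_0"
  assumes "\<exists>j. p j \<noteq> 0" and "\<exists>j. q j \<noteq> 0" and "\<exists>j. \<beta> j \<noteq> 0"
  shows "(fin_dim_ops (lie_generated (Delta p \<beta>) (Delta q \<beta>))
            \<longleftrightarrow> lie_bracket (Delta p \<beta>) (Delta q \<beta>) = (\<lambda>f. 0))
       \<and> (lie_bracket (Delta p \<beta>) (Delta q \<beta>) = (\<lambda>f. 0)
            \<longleftrightarrow> pairing \<beta> p = pairing \<beta> q)"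
proof -
  let ?Dp = "Delta p \<beta>"
  let ?Dq = "Delta q \<beta>"
  let ?L = "lie_generated ?Dp ?Dq"
  let ?a = "pairing \<beta> p"
  let ?b = "pairing \<beta> q"
  obtain ip where ip: "p ip \<noteq> 0" using assms(1) by blast
  obtain iq where iq: "q iq \<noteq> 0" using assms(2) by blast
  obtain j where j: "\<beta> j \<noteq> 0" using assms(3) by blast
  define e where "e = (\<lambda>i. if i = j then 1 else (0::nat))"
  have pe: "pairing \<beta> e = \<beta> j"
    unfolding pairing_def e_def by (simp add: if_distrib cong: if_cong)
  define f0 where "f0 = Poly_Mapping.single e (1::'a)"
  have val: "Poly_Mapping.lookup (Delta r \<beta> f0) (\<lambda>i. e i + r i) = \<beta> j" for r
  proof -
    have "r \<le> (\<lambda>i. e i + r i)" by (rule pw_le) simp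
    moreover have "(\<lambda>i. e i + r i) - r = e" by (rule ext) simp
    ultimately show ?thesis by (simp add: lookup_Delta f0_def pe)
  qed
  have br: "lie_bracket ?Dp ?Dq = op_scale (?b - ?a) (Delta (\<lambda>i. p i + q i) \<beta>)"
    using bracket_Delta[of 1 p \<beta> 1 q] by (simp add: op_scale_1)
  have iii: "lie_bracket ?Dp ?Dq = (\<lambda>f. 0) \<longleftrightarrow> ?a = ?b"
  proof
    assume z: "lie_bracket ?Dp ?Dq = (\<lambda>f. 0)"
    have "Poly_Mapping.lookup (lie_bracket ?Dp ?Dq f0) (\<lambda>i. e i + (p i + q i)) = (?b - ?a) * \<beta> j"
      unfolding br lookup_scale val ..
    with z j show "?a = ?b" by simp
  next
    assume "?a = ?b"
    then show "lie_bracket ?Dp ?Dq = (\<lambda>f. 0)"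
      unfolding br by (intro ext poly_mapping_eqI) (simp add: lookup_scale)
  qed
  have i: "fin_dim_ops ?L \<longleftrightarrow> ?a = ?b"
  proof
    assume ab: "?a = ?b"
    have comm: "?Dp (?Dq f) = ?Dq (?Dp f)" for f
    proof -
      have "lie_bracket ?Dp ?Dq f = 0" using iii ab by simp
      then show ?thesis unfolding lie_bracket_def by simp
    qed
    show "fin_dim_ops ?L"
      unfolding fin_dim_ops_def
    proof (intro exI[of _ "{?Dp, ?Dq}"] conjI ballI)
      show "finite {?Dp, ?Dq}" by simp
    next
      fix X assume X: "X \<in> ?L"
      obtain \<alpha> \<gamma> where h: "\<And>f k. Poly_Mapping.lookup (X f) k =
        \<alpha> * Poly_Mapping.lookup (?Dp f) k + \<gamma> * Poly_Mapping.lookup (?Dq f) k"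
        using span_case[OF comm X] by blast
      show "\<exists>c. X = (\<lambda>f. \<Sum>b\<in>{?Dp, ?Dq}. op_scale (c b) b f)"
      proof (cases "?Dp = ?Dq")
        case True
        show ?thesis
          by (intro exI[of _ "\<lambda>_. \<alpha> + \<gamma>"] ext poly_mapping_eqI)
             (simp add: True h lookup_scale algebra_simps)
      next
        case False
        show ?thesis
          by (intro exI[of _ "\<lambda>x. if x = ?Dp then \<alpha> else \<gamma>"] ext poly_mapping_eqI)
             (use False in \<open>simp add: h lookup_scale lookup_add\<close>)
      qed
    qed
  next
    assume fd: "fin_dim_ops ?L"
    show "?a = ?b"
    proof (rule ccontr)
      assume ne: "?a \<noteq> ?b"
      obtain B where finB: "finite B" and
        B: "\<forall>X\<in>?L. \<exists>c. X = (\<lambda>f. \<Sum>b\<in>B. op_scale (c b) b f)"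
        using fd unfolding fin_dim_ops_def by blast
      define K where "K = (\<Union>b\<in>B. Poly_Mapping.keys (b f0))"
      have finK: "finite K" unfolding K_def using finB by simp
      have inK: "k \<in> K" if X: "X \<in> ?L" and nz: "Poly_Mapping.lookup (X f0) k \<noteq> 0" for X k
      proof (rule ccontr)
        assume nk: "k \<notin> K"
        obtain c where c: "X = (\<lambda>f. \<Sum>b\<in>B. op_scale (c b) b f)" using B X by blast
        have "Poly_Mapping.lookup (X f0) k = (\<Sum>b\<in>B. c b * Poly_Mapping.lookup (b f0) k)"
          unfolding c lookup_sum lookup_scale ..
        also have "\<dots> = 0"
          by (rule sum.neutral) (use nk in \<open>auto simp: K_def in_keys_iff\<close>)
        finally show False using nz by simp
      qed
      define S where "S r \<longleftrightarrow> (\<exists>c. c \<noteq> 0 \<and> op_scale c (Delta r \<beta>) \<in> ?L)" for r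
      have SK: "(\<lambda>i. e i + r i) \<in> K" if "S r" for r
      proof -
        obtain c where c: "c \<noteq> 0" "op_scale c (Delta r \<beta>) \<in> ?L" using \<open>S r\<close> S_def by blast
        have "Poly_Mapping.lookup (op_scale c (Delta r \<beta>) f0) (\<lambda>i. e i + r i) = c * \<beta> j"
          unfolding lookup_scale val ..
        then show ?thesis using c j by (intro inK[OF c(2)]) simp
      qed
      have chain: "S (\<lambda>i. r i + k * s i)"
        if Ss: "S s" and Sr: "S r" and nz: "\<forall>k::nat. pairing \<beta> r + of_nat k * pairing \<beta> s \<noteq> pairing \<beta> s"
        for s r k
      proof (induction k)
        case 0
        then show ?case using Sr by simp
      next
        case (Suc k)
        obtain c where c: "c \<noteq> 0" "op_scale c (Delta s \<beta>) \<in> ?L" using Ss S_def by blast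
        obtain d where d: "d \<noteq> 0" "op_scale d (Delta (\<lambda>i. r i + k * s i) \<beta>) \<in> ?L"
          using Suc S_def by blast
        have "lie_bracket (op_scale c (Delta s \<beta>)) (op_scale d (Delta (\<lambda>i. r i + k * s i) \<beta>)) \<in> ?L"
          using c d by (intro lie_generated.bracket)
        moreover have "(\<lambda>i. s i + (r i + k * s i)) = (\<lambda>i. r i + Suc k * s i)" by (rule ext) simp
        ultimately have "op_scale (c * d * (pairing \<beta> r + of_nat k * pairing \<beta> s - pairing \<beta> s))
           (Delta (\<lambda>i. r i + Suc k * s i) \<beta>) \<in> ?L"
          unfolding bracket_Delta pairing_lin by simp
        moreover have "c * d * (pairing \<beta> r + of_nat k * pairing \<beta> s - pairing \<beta> s) \<noteq> 0"
          using c d nz by simp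
        ultimately show ?case unfolding S_def by blast
      qed
      have Sp: "S p" unfolding S_def
        by (intro exI[of _ 1]) (simp add: op_scale_1 lie_generated.gen1)
      have Sq: "S q" unfolding S_def
        by (intro exI[of _ 1]) (simp add: op_scale_1 lie_generated.gen2)
      have Spq: "S (\<lambda>i. p i + q i)" unfolding S_def
      proof (intro exI[of _ "?b - ?a"] conjI)
        show "?b - ?a \<noteq> 0" using ne by simp
        show "op_scale (?b - ?a) (Delta (\<lambda>i. p i + q i) \<beta>) \<in> ?L"
          unfolding br[symmetric] by (intro lie_generated.bracket lie_generated.gen1 lie_generated.gen2)
      qed
      have key: "\<exists>s r i0. S s \<and> S r \<and> s i0 \<noteq> 0 \<and>
         (\<forall>k::nat. pairing \<beta> r + of_nat k * pairing \<beta> s \<noteq> pairing \<beta> s)"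
      proof -
        consider "?a = 0" | "?b = 0" | "?a \<noteq> 0" "?b \<noteq> 0" "?a + ?b = 0"
          | "?a \<noteq> 0" "?b \<noteq> 0" "?a + ?b \<noteq> 0" "\<forall>k::nat. ?b + of_nat k * ?a \<noteq> ?a"
          | "?a \<noteq> 0" "?b \<noteq> 0" "?a + ?b \<noteq> 0" "\<exists>k::nat. ?b + of_nat k * ?a = ?a"
          by blast
        then show ?thesis
        proof cases
          case 1
          then show ?thesis using Sp Sq ip ne by (intro exI[of _ p] exI[of _ q] exI[of _ ip]) simp
        next
          case 2
          then show ?thesis using Sp Sq iq ne by (intro exI[of _ q] exI[of _ p] exI[of _ iq]) simp
        next
          case 3
          then show ?thesis using Sp Spq ip
            by (intro exI[of _ "\<lambda>i. p i + q i"] exI[of _ p] exI[of _ ip]) (simp add: pairing_add)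
        next
          case 4
          then show ?thesis using Sp Sq ip by (intro exI[of _ p] exI[of _ q] exI[of _ ip]) simp
        next
          case 5
          then obtain k :: nat where hk: "?b + of_nat k * ?a = ?a" by blast
          have k0: "k \<noteq> 0"
          proof
            assume "k = 0"
            then show False using hk ne by simp
          qed
          have k1: "k \<noteq> 1" using hk 5 by auto
          have k2: "k \<noteq> 2"
          proof
            assume "k = 2"
            then have "?b + 2 * ?a = ?a" using hk by simp
            then have "?a + ?b = 0" by (simp add: algebra_simps)
            then show False using 5 by simp
          qed
          have k3: "k \<ge> 3" using k0 k1 k2 by linarith
          have "\<forall>m::nat. ?a + of_nat m * ?b \<noteq> ?b"
          proof (intro allI notI)
            fix m :: nat
            assume hm: "?a + of_nat m * ?b = ?b"
            have bb: "?b = ?a - of_nat k * ?a" using hk by (simp add: algebra_simps)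
            have "?a * (of_nat m + of_nat k - of_nat m * of_nat k) =
                (?a + of_nat m * (?a - of_nat k * ?a)) - (?a - of_nat k * ?a)"
              by (simp add: algebra_simps)
            also have "\<dots> = 0" using hm unfolding bb[symmetric] by simp
            finally have "of_nat m + of_nat k - of_nat m * of_nat k = (0::'a)" using 5 by simp
            then have "of_nat (m + k) = (of_nat (m * k) :: 'a)" by simp
            then have "m + k = m * k" by (simp only: of_nat_eq_iff)
            then show False using k3 nat_aux by blast
          qed
          then show ?thesis using Sp Sq iq by (intro exI[of _ q] exI[of _ p] exI[of _ iq]) simp
        qed
      qed
      then obtain s r i0 where Ss: "S s" and Sr: "S r" and i0: "s i0 \<noteq> 0"
        and nz: "\<forall>k::nat. pairing \<beta> r + of_nat k * pairing \<beta> s \<noteq> pairing \<beta> s" by blast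
      let ?g = "\<lambda>k::nat. (\<lambda>i. e i + (r i + k * s i))"
      have "range ?g \<subseteq> K" using SK[OF chain[OF Ss Sr nz]] by blast
      then have "finite (range ?g)" using finK finite_subset by blast
      moreover have "inj ?g"
      proof (rule injI)
        fix x y assume "?g x = ?g y"
        then have "e i0 + (r i0 + x * s i0) = e i0 + (r i0 + y * s i0)" by metis
        then show "x = y" using i0 by simp
      qed
      ultimately have "finite (UNIV :: nat set)" using finite_imageD by blast
      then show False by simp
    qed
  qed
  show ?thesis using i iii by blast
qed

end
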